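(* Let $C=w_1-\dots-w_m$ be a chain with positive weights. If there exists an admissible decomposition of $C$ into $k$ subchains with $k>2$, then there exists an admissible decomposition of $C$ into $k-1$ subchains.
   Context: A decomposition of $C=w_1-\dots-w_m$ into $p+1$ subchains is given by integers $0=i_0<i_1<\dots<i_p<i_{p+1}=m$, with $C_j=w_{i_{j-1}+1}-\dots-w_{i_j}$. Let $\tilde\Sigma_{\rm odd}(C_j)=\sum\{w_i : i_{j-1}<i\le i_j,\ i\text{ odd}\}$ and $\tilde\Sigma_{\rm even}(C_j)=\sum\{w_i : i_{j-1}<i\le i_j,\ i\text{ even}\}$ (parity with respect to the numbering in $C$), and for $1\le j\le p$ let $\Delta_j=\tilde\Sigma_{\rm even}(C_j)\tilde\Sigma_{\rm odd}(C_{j+1})-\tilde\Sigma_{\rm even}(C_{j+1})\tilde\Sigma_{\rm odd}(C_j)$. The decomposition is admissible if every $C_j$ has at least two edges and, for every $1\le j\le p$, $\Delta_j<0$ when $i_j$ is even and $\Delta_j>0$ when $i_j$ is odd. *)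

theory Defs
  imports Complex_Main
begin

text \<open>A chain C = w_1 - ... - w_m is given by its length m and weights w :: nat => real
  (only w 1, ..., w m are relevant). A decomposition into p+1 subchains is given by
  cut points i 0 = 0 < i 1 < ... < i p < i (p+1) = m; subchain C_j (1 <= j <= p+1)
  consists of the positions l with i (j-1) < l <= i j.\<close>

definition is_decomposition :: "nat \<Rightarrow> nat \<Rightarrow> (nat \<Rightarrow> nat) \<Rightarrow> bool" where
  "is_decomposition m p i \<longleftrightarrow>
     i 0 = 0 \<and> i (Suc p) = m \<and> (\<forall>j\<le>p. i j < i (Suc j))"

definition sigma_odd :: "(nat \<Rightarrow> real) \<Rightarrow> (nat \<Rightarrow> nat) \<Rightarrow> nat \<Rightarrow> real" where
  "sigma_odd w i j = (\<Sum>l \<in> {l. i (j - 1) < l \<and> l \<le> i j \<and> odd l}. w l)"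

definition sigma_even :: "(nat \<Rightarrow> real) \<Rightarrow> (nat \<Rightarrow> nat) \<Rightarrow> nat \<Rightarrow> real" where
  "sigma_even w i j = (\<Sum>l \<in> {l. i (j - 1) < l \<and> l \<le> i j \<and> even l}. w l)"

definition Delta :: "(nat \<Rightarrow> real) \<Rightarrow> (nat \<Rightarrow> nat) \<Rightarrow> nat \<Rightarrow> real" where
  "Delta w i j = sigma_even w i j * sigma_odd w i (Suc j) - sigma_even w i (Suc j) * sigma_odd w i j"

text \<open>Admissible decomposition of C into p+1 subchains. Each subchain C_j has
  i j - i (j-1) edges (the weights w_l are edge weights).\<close>
definition admissible :: "nat \<Rightarrow> (nat \<Rightarrow> real) \<Rightarrow> nat \<Rightarrow> (nat \<Rightarrow> nat) \<Rightarrow> bool" where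
  "admissible m w p i \<longleftrightarrow>
     is_decomposition m p i \<and>
     (\<forall>j \<in> {1..Suc p}. i (j - 1) + 2 \<le> i j) \<and>
     (\<forall>j \<in> {1..p}. (even (i j) \<longrightarrow> Delta w i j < 0) \<and> (odd (i j) \<longrightarrow> Delta w i j > 0))"

end

theory Submission
  imports Defs
begin

lemma choose_cut:
  fixes r M :: "nat \<Rightarrow> real" and up :: "nat \<Rightarrow> bool" and p :: nat
  assumes "p \<ge> 1"
  and ord: "\<And>j. 1 \<le> j \<Longrightarrow> j \<le> p \<Longrightarrow> (up j \<longrightarrow> r j < r (Suc j)) \<and> (\<not> up j \<longrightarrow> r (Suc j) < r j)"
  and med: "\<And>j. 1 \<le> j \<Longrightarrow> j \<le> p \<Longrightarrow> min (r j) (r (Suc j)) < M j \<and> M j < max (r j) (r (Suc j))"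
  shows "\<exists>j. 1 \<le> j \<and> j \<le> p
     \<and> (j = 1 \<or> ((up (j-1) \<longrightarrow> r (j-1) < M j) \<and> (\<not> up (j-1) \<longrightarrow> M j < r (j-1))))
     \<and> (j = p \<or> ((up (Suc j) \<longrightarrow> M j < r (Suc (Suc j))) \<and> (\<not> up (Suc j) \<longrightarrow> r (Suc (Suc j)) < M j)))"
proof -
  define L where "L j \<longleftrightarrow> (j = 1 \<or> ((up (j-1) \<longrightarrow> r (j-1) < M j) \<and> (\<not> up (j-1) \<longrightarrow> M j < r (j-1))))" for j
  define R where "R j \<longleftrightarrow> (j = p \<or> ((up (Suc j) \<longrightarrow> M j < r (Suc (Suc j))) \<and> (\<not> up (Suc j) \<longrightarrow> r (Suc (Suc j)) < M j)))" for j
  have step: "R j \<or> L (Suc j)" if "1 \<le> j" "j < p" for j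
  proof -
    have a: "(up j \<longrightarrow> r j < r (Suc j)) \<and> (\<not> up j \<longrightarrow> r (Suc j) < r j)" using ord[of j] that by auto
    have b: "(up (Suc j) \<longrightarrow> r (Suc j) < r (Suc (Suc j))) \<and> (\<not> up (Suc j) \<longrightarrow> r (Suc (Suc j)) < r (Suc j))" using ord[of "Suc j"] that by auto
    have c: "min (r j) (r (Suc j)) < M j \<and> M j < max (r j) (r (Suc j))" using med[of j] that by auto
    have d: "min (r (Suc j)) (r (Suc (Suc j))) < M (Suc j) \<and> M (Suc j) < max (r (Suc j)) (r (Suc (Suc j)))" using med[of "Suc j"] that by auto
    show ?thesis unfolding L_def R_def using a b c d
      by (cases "up j"; cases "up (Suc j)") (auto simp: min_def max_def split: if_splits)
  qed
  show ?thesis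
  proof (rule ccontr)
    assume nex: "\<not> ?thesis"
    have "1 \<le> j \<Longrightarrow> j \<le> p \<Longrightarrow> L j" for j
    proof (induction j)
      case 0 thus ?case by simp
    next
      case (Suc j)
      show ?case
      proof (cases "j = 0")
        case True then show ?thesis by (simp add: L_def)
      next
        case False
        then have Lj: "L j" using Suc by auto
        have nex': "\<not> (1 \<le> j' \<and> j' \<le> p \<and> L j' \<and> R j')" for j' using nex unfolding L_def R_def by blast
        have "\<not> R j" using nex'[of j] Lj False Suc.prems by auto
        then show ?thesis using step[of j] False Suc.prems by auto
      qed
    qed
    then have "L p" using assms(1) by auto
    moreover have "R p" unfolding R_def by simp
    ultimately show False using nex assms(1) unfolding L_def R_def by auto
  qed
qed

lemma dec_mono:
  assumes "is_decomposition m p i" "a \<le> b" "b \<le> Suc p"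
  shows "i a \<le> i b"
  using assms(2,3)
proof (induction b)
  case 0 thus ?case by simp
next
  case (Suc b)
  show ?case
  proof (cases "a = Suc b")
    case True then show ?thesis by simp
  next
    case False
    then have "i a \<le> i b" using Suc by auto
    moreover have "i b < i (Suc b)" using assms(1) Suc.prems unfolding is_decomposition_def by auto
    ultimately show ?thesis by simp
  qed
qed

lemma dec_le_m:
  assumes "is_decomposition m p i" "b \<le> Suc p"
  shows "i b \<le> m"
  using dec_mono[of m p i b "Suc p"] assms unfolding is_decomposition_def by auto

lemma fin_set: "finite {l::nat. a < l \<and> l \<le> b \<and> P l}"
  by (rule finite_subset[of _ "{..b}"]) auto

lemma sig_pos:
  assumes "\<forall>l\<in>{1..m}. w l > 0" "i (j-1) + 2 \<le> i j" "i j \<le> m"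
  shows "sigma_odd w i j > 0" "sigma_even w i j > 0"
proof -
  have "i (j-1) + 1 \<in> {l. i (j - 1) < l \<and> l \<le> i j \<and> odd l} \<or> i (j-1) + 2 \<in> {l. i (j - 1) < l \<and> l \<le> i j \<and> odd l}"
    using assms(2) by auto
  then have ne: "{l. i (j - 1) < l \<and> l \<le> i j \<and> odd l} \<noteq> {}" by auto
  show "sigma_odd w i j > 0" unfolding sigma_odd_def
    by (rule sum_pos[OF fin_set ne]) (use assms in auto)
next
  have "i (j-1) + 1 \<in> {l. i (j - 1) < l \<and> l \<le> i j \<and> even l} \<or> i (j-1) + 2 \<in> {l. i (j - 1) < l \<and> l \<le> i j \<and> even l}"
    using assms(2) by auto
  then have ne: "{l. i (j - 1) < l \<and> l \<le> i j \<and> even l} \<noteq> {}" by auto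
  show "sigma_even w i j > 0" unfolding sigma_even_def
    by (rule sum_pos[OF fin_set ne]) (use assms in auto)
qed

lemma cross_sign:
  fixes Ea Eb Oa Ob :: real
  assumes "Oa > 0" "Ob > 0"
  shows "(Ea * Ob - Eb * Oa < 0) \<longleftrightarrow> Ea / Oa < Eb / Ob"
    and "(Ea * Ob - Eb * Oa > 0) \<longleftrightarrow> Eb / Ob < Ea / Oa"
  using assms by (simp_all add: field_simps)

lemma mediant:
  fixes Ea Eb Oa Ob :: real
  assumes "Oa > 0" "Ob > 0" "Ea / Oa \<noteq> Eb / Ob"
  shows "min (Ea/Oa) (Eb/Ob) < (Ea+Eb)/(Oa+Ob) \<and> (Ea+Eb)/(Oa+Ob) < max (Ea/Oa) (Eb/Ob)"
proof (cases "Ea / Oa < Eb / Ob")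
  case True
  then have "Ea * Ob < Eb * Oa" using assms by (simp add: field_simps)
  then have "Ea/Oa < (Ea+Eb)/(Oa+Ob)" "(Ea+Eb)/(Oa+Ob) < Eb/Ob" using assms
    by (simp_all add: field_simps)
  then show ?thesis using True by auto
next
  case False
  then have F: "Eb / Ob < Ea / Oa" using assms(3) by auto
  then have "Eb * Oa < Ea * Ob" using assms by (simp add: field_simps)
  then have "Eb/Ob < (Ea+Eb)/(Oa+Ob)" "(Ea+Eb)/(Oa+Ob) < Ea/Oa" using assms
    by (simp_all add: field_simps)
  then show ?thesis using F by auto
qed

lemma split_sum:
  fixes f :: "nat \<Rightarrow> real"
  assumes "a \<le> b" "b \<le> c"
  shows "(\<Sum>l\<in>{l. a<l \<and> l\<le>c \<and> P l}. f l) = (\<Sum>l\<in>{l. a<l \<and> l\<le>b \<and> P l}. f l) + (\<Sum>l\<in>{l. b<l \<and> l\<le>c \<and> P l}. f l)"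
proof -
  have "{l. a<l \<and> l\<le>c \<and> P l} = {l. a<l \<and> l\<le>b \<and> P l} \<union> {l. b<l \<and> l\<le>c \<and> P l}"
    using assms by auto
  then show ?thesis by (simp add: sum.union_disjoint[OF fin_set fin_set] disjoint_iff)
qed


theorem mainTheorem8:
  fixes w :: "nat \<Rightarrow> real" and m k :: nat
  assumes "\<forall>l \<in> {1..m}. w l > 0"
    and "k > 2"
    and "\<exists>i. admissible m w (k - 1) i"
  shows "\<exists>i. admissible m w (k - 2) i"
proof -
  define p where "p = k - 1"
  have p2: "p \<ge> 2" and kp: "k - 2 = p - 1" using assms(2) unfolding p_def by auto
  obtain i where adm: "admissible m w p i" using assms(3) unfolding p_def by auto
  have dec: "is_decomposition m p i" using adm unfolding admissible_def by auto
  have len: "\<And>j. 1 \<le> j \<Longrightarrow> j \<le> Suc p \<Longrightarrow> i (j-1) + 2 \<le> i j" using adm unfolding admissible_def by auto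
  have dl: "\<And>j. 1 \<le> j \<Longrightarrow> j \<le> p \<Longrightarrow> (even (i j) \<longrightarrow> Delta w i j < 0) \<and> (odd (i j) \<longrightarrow> Delta w i j > 0)"
    using adm unfolding admissible_def by auto
  have istep: "\<And>j. j \<le> p \<Longrightarrow> i j < i (Suc j)" using dec unfolding is_decomposition_def by auto
  have i0: "i 0 = 0" and im: "i (Suc p) = m" using dec unfolding is_decomposition_def by auto
  define E where "E j = sigma_even w i j" for j
  define Od where "Od j = sigma_odd w i j" for j
  have Opos: "Od j > 0" if "1 \<le> j" "j \<le> Suc p" for j
    unfolding Od_def by (rule sig_pos(1)[OF assms(1) len[OF that] dec_le_m[OF dec that(2)]])
  define r where "r j = E j / Od j" for j
  define M where "M j = (E j + E (Suc j)) / (Od j + Od (Suc j))" for j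
  have ord: "(even (i j) \<longrightarrow> r j < r (Suc j)) \<and> (\<not> even (i j) \<longrightarrow> r (Suc j) < r j)"
    if "1 \<le> j" "j \<le> p" for j
    using dl[OF that] cross_sign[OF Opos[of j] Opos[of "Suc j"], of "E j" "E (Suc j)"] that
    unfolding Delta_def r_def E_def Od_def by auto
  have med: "min (r j) (r (Suc j)) < M j \<and> M j < max (r j) (r (Suc j))"
    if "1 \<le> j" "j \<le> p" for j
  proof -
    have "r j \<noteq> r (Suc j)" using ord[OF that] by auto
    then show ?thesis unfolding r_def M_def
      using mediant[OF Opos[of j] Opos[of "Suc j"]] that by auto
  qed
  have p1: "p \<ge> 1" using p2 by simp
  obtain j where j1: "1 \<le> j" and jp: "j \<le> p"
    and Lj: "j = 1 \<or> ((even (i (j-1)) \<longrightarrow> r (j-1) < M j) \<and> (\<not> even (i (j-1)) \<longrightarrow> M j < r (j-1)))"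
    and Rj: "j = p \<or> ((even (i (Suc j)) \<longrightarrow> M j < r (Suc (Suc j))) \<and> (\<not> even (i (Suc j)) \<longrightarrow> r (Suc (Suc j)) < M j))"
    using choose_cut[of p "\<lambda>j. even (i j)" r M, OF p1 ord med] by blast
  define i' where "i' t = (if t < j then i t else i (Suc t))" for t
  have mono: "\<And>a b. a \<le> b \<Longrightarrow> b \<le> Suc p \<Longrightarrow> i a \<le> i b" using dec_mono[OF dec] by auto
  have so1: "sigma_odd w i' t = Od t" "sigma_even w i' t = E t" if "t < j" for t
    using that unfolding sigma_odd_def sigma_even_def Od_def E_def i'_def by auto
  have so2: "sigma_odd w i' j = Od j + Od (Suc j)" "sigma_even w i' j = E j + E (Suc j)"
  proof -
    have a: "i' (j-1) = i (j-1)" "i' j = i (Suc j)" using j1 unfolding i'_def by auto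
    have b: "i (j-1) \<le> i j" "i j \<le> i (Suc j)" using mono jp by auto
    show "sigma_odd w i' j = Od j + Od (Suc j)" unfolding sigma_odd_def Od_def a
      using split_sum[OF b] by simp
    show "sigma_even w i' j = E j + E (Suc j)" unfolding sigma_even_def E_def a
      using split_sum[OF b] by simp
  qed
  have so3: "sigma_odd w i' t = Od (Suc t)" "sigma_even w i' t = E (Suc t)" if "j < t" for t
  proof -
    have a: "i' (t-1) = i t" "i' t = i (Suc t)" using that j1 unfolding i'_def by auto
    show "sigma_odd w i' t = Od (Suc t)" unfolding sigma_odd_def Od_def a using that by simp
    show "sigma_even w i' t = E (Suc t)" unfolding sigma_even_def E_def a using that by simp
  qed
  define r' where "r' t = sigma_even w i' t / sigma_odd w i' t" for t
  have r'v: "r' t = (if t < j then r t else if t = j then M j else r (Suc t))" for t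
    unfolding r'_def r_def M_def using so1[of t] so2 so3[of t] by auto
  have Od'pos: "sigma_odd w i' t > 0" if "1 \<le> t" "t \<le> p" for t
  proof -
    consider "t < j" | "t = j" | "j < t" by linarith
    then show ?thesis
    proof cases
      case 1 then show ?thesis using so1 Opos that by auto
    next
      case 2 then show ?thesis using so2 Opos[of j] Opos[of "Suc j"] that by auto
    next
      case 3 then show ?thesis using so3 Opos[of "Suc t"] that by auto
    qed
  qed
  have isd: "is_decomposition m (p-1) i'"
  proof -
    have "i' 0 = 0" using j1 i0 unfolding i'_def by auto
    moreover have "i' (Suc (p-1)) = m" using jp p1 im unfolding i'_def by auto
    moreover have "i' t < i' (Suc t)" if "t \<le> p - 1" for t
    proof -
      consider "Suc t < j" | "Suc t = j" | "j \<le> t" by linarith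
      then show ?thesis
      proof cases
        case 1 then show ?thesis unfolding i'_def using istep[of t] jp by auto
      next
        case 2 then show ?thesis unfolding i'_def using istep[of t] istep[of "Suc t"] jp that p1 by auto
      next
        case 3 then show ?thesis unfolding i'_def using istep[of "Suc t"] that p1 by auto
      qed
    qed
    ultimately show ?thesis unfolding is_decomposition_def by auto
  qed
  have isl: "i' (t-1) + 2 \<le> i' t" if "1 \<le> t" "t \<le> Suc (p-1)" for t
  proof -
    consider "t < j" | "t = j" | "j < t" by linarith
    then show ?thesis
    proof cases
      case 1 then show ?thesis unfolding i'_def using len[of t] that jp by auto
    next
      case 2 then show ?thesis unfolding i'_def using len[of t] mono[of j "Suc j"] that jp by auto
    next
      case 3 then show ?thesis unfolding i'_def using len[of "Suc t"] that p1 by auto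
    qed
  qed
  have isD: "(even (i' t) \<longrightarrow> Delta w i' t < 0) \<and> (odd (i' t) \<longrightarrow> Delta w i' t > 0)"
    if "1 \<le> t" "t \<le> p - 1" for t
  proof -
    have c: "Delta w i' t < 0 \<longleftrightarrow> r' t < r' (Suc t)" "Delta w i' t > 0 \<longleftrightarrow> r' (Suc t) < r' t"
      unfolding Delta_def r'_def
      using cross_sign[OF Od'pos[of t] Od'pos[of "Suc t"]] that by auto
    consider "Suc t < j" | "Suc t = j" | "t = j" | "j < t" by linarith
    then show ?thesis
    proof cases
      case 1 then show ?thesis unfolding c r'v using ord[of t] that jp
        by (auto simp: i'_def)
    next
      case 2
      then have "j \<noteq> 1" "j - 1 = t" using that by auto
      then show ?thesis unfolding c r'v using Lj 2 by (auto simp: i'_def)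
    next
      case 3
      then have "j \<noteq> p" using that p1 by auto
      then show ?thesis unfolding c r'v using Rj 3 by (auto simp: i'_def)
    next
      case 4 then show ?thesis unfolding c r'v using ord[of "Suc t"] that p1
        by (auto simp: i'_def)
    qed
  qed
  have "admissible m w (p-1) i'"
    unfolding admissible_def using isd isl isD by auto
  then show ?thesis using kp by auto
qed

end
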